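(* Let $(X,o,\mu)$ be a boundedly-compact pmm space. (i) The curve $t\mapsto\overline B_t(o)$, $t\ge0$, is càdlàg with respect to the Hausdorff metric on closed subsets of $X$, and its left limit at $t=r>0$ is the closure of $B_r(o)$. (ii) The curve $t\mapsto\mu|_{\overline B_t(o)}$ is càdlàg with respect to the Prokhorov metric, and its left limit at $t=r>0$ is $\mu|_{B_r(o)}$.
   Context: A pmm space is $(X,o,\mu)$ with $X$ a metric space, $o\in X$, $\mu$ a nonnegative Borel measure; it is boundedly compact if every closed ball $\overline B_r(x)=\{y:d(x,y)\le r\}$ is compact and has finite $\mu$-measure. Open ball $B_r(x)=\{y:d(x,y)<r\}$. Hausdorff distance: $d_H(A,B)=\inf\{\epsilon\ge0:A\subseteq B^\epsilon,B\subseteq A^\epsilon\}$, $A^\epsilon=\{z:\exists a\in A, d(z,a)\le\epsilon\}$. Prokhorov distance: $d_P(\mu,\nu)=\inf\{\epsilon>0:\mu(A)\le\nu(A^\epsilon)+\epsilon,\ \nu(A)\le\mu(A^\epsilon)+\epsilon\ \forall A\text{ closed}\}$. *)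

theory Defs
  imports "HOL-Analysis.Analysis"
begin

text \<open>A pmm space (X, o, mu): X is the carrier type (a metric space), o a point,
  mu a (nonnegative) Borel measure on X.  Boundedly compact: every closed ball is
  compact and has finite measure.\<close>
definition boundedly_compact_pmm :: "'a::metric_space \<Rightarrow> 'a measure \<Rightarrow> bool" where
  "boundedly_compact_pmm x0 M \<longleftrightarrow>
     sets M = sets borel \<and>
     (\<forall>x r. compact (cball x r) \<and> emeasure M (cball x r) < \<infinity>)"

definition thick :: "'a::metric_space set \<Rightarrow> real \<Rightarrow> 'a set" where
  "thick A e = {z. \<exists>a\<in>A. dist z a \<le> e}"

definition hausdorff_dist :: "'a::metric_space set \<Rightarrow> 'a set \<Rightarrow> real" where
  "hausdorff_dist A B = Inf {e. e \<ge> 0 \<and> A \<subseteq> thick B e \<and> B \<subseteq> thick A e}"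

definition prokhorov_dist :: "'a::metric_space measure \<Rightarrow> 'a measure \<Rightarrow> real" where
  "prokhorov_dist M N = Inf {e. e > 0 \<and> (\<forall>A. closed A \<longrightarrow>
        emeasure M A \<le> emeasure N (thick A e) + ennreal e \<and>
        emeasure N A \<le> emeasure M (thick A e) + ennreal e)}"

definition restrict_meas :: "'a measure \<Rightarrow> 'a set \<Rightarrow> 'a measure" where
  "restrict_meas M S = density M (indicator S)"

end

theory Submission
  imports Defs
begin

lemma compact_min_gt:
  fixes f :: "'a::metric_space \<Rightarrow> real"
  assumes "compact K" "continuous_on K f" "\<forall>y\<in>K. c < f y"
  shows "\<exists>m>c. \<forall>y\<in>K. m \<le> f y"
proof (cases "K = {}")
  case True then show ?thesis by (intro exI[of _ "c+1"]) auto
next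
  case False
  then obtain y0 where "y0 \<in> K" "\<forall>y\<in>K. f y0 \<le> f y"
    using continuous_attains_inf[OF assms(1) False assms(2)] by blast
  then show ?thesis using assms(3) by blast
qed

lemma thick_closed:
  fixes A :: "'a::metric_space set"
  assumes cb: "\<forall>(x::'a) (r::real). compact (cball x r)" and A: "closed A"
  shows "closed (thick A e)"
proof -
  have "open (- thick A e)"
  proof (unfold open_dist, intro ballI)
    fix z assume z: "z \<in> - thick A e"
    let ?K = "A \<inter> cball z (e+1)"
    have "compact ?K" using cb A by (metis closed_Int_compact)
    moreover have "continuous_on ?K (dist z)" by (intro continuous_intros)
    moreover have "\<forall>y\<in>?K. e < dist z y" using z by (auto simp: thick_def)
    ultimately obtain m where m: "m > e" "\<forall>y\<in>?K. m \<le> dist z y"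
      using compact_min_gt by blast
    define d where "d = min m (e+1)"
    have dA: "\<forall>a\<in>A. d \<le> dist z a" using m unfolding d_def
      by (metis IntI mem_cball min.coboundedI1 min.coboundedI2 linorder_le_cases)
    show "\<exists>ea>0. \<forall>y. dist y z < ea \<longrightarrow> y \<in> - thick A e"
    proof (intro exI[of _ "d - e"] conjI allI impI)
      show "d - e > 0" using m unfolding d_def by simp
      fix y assume "dist y z < d - e"
      show "y \<in> - thick A e"
      proof
        assume "y \<in> thick A e"
        then obtain a where "a \<in> A" "dist y a \<le> e" by (auto simp: thick_def)
        moreover have "dist z a \<le> dist z y + dist y a" by (rule dist_triangle)
        ultimately show False using dA \<open>dist y z < d - e\<close> by (fastforce simp: dist_commute)
      qed
    qed
  qed
  then show ?thesis by (simp add: closed_def)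
qed

lemma tendsto0I:
  fixes f :: "real \<Rightarrow> real"
  assumes "\<And>\<epsilon>. \<epsilon> > 0 \<Longrightarrow> eventually (\<lambda>s. 0 \<le> f s \<and> f s < \<epsilon>) F"
  shows "(f \<longlongrightarrow> 0) F"
proof (rule tendstoI)
  fix \<epsilon> :: real assume "\<epsilon> > 0"
  from assms[OF this] show "eventually (\<lambda>s. dist (f s) 0 < \<epsilon>) F"
    by (rule eventually_mono) auto
qed

lemma hd_bound:
  assumes "0 \<le> e" "A \<subseteq> thick B e" "B \<subseteq> thick A e"
  shows "0 \<le> hausdorff_dist A B \<and> hausdorff_dist A B \<le> e"
proof -
  let ?S = "{e. e \<ge> 0 \<and> A \<subseteq> thick B e \<and> B \<subseteq> thick A e}"
  have "e \<in> ?S" using assms by auto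
  moreover have "bdd_below ?S" by (rule bdd_belowI[of _ 0]) auto
  ultimately show ?thesis unfolding hausdorff_dist_def
    by (metis (no_types, lifting) cInf_greatest cInf_lower empty_iff mem_Collect_eq)
qed

lemma pd_bound:
  assumes "0 < e" "\<forall>A. closed A \<longrightarrow>
        emeasure M A \<le> emeasure N (thick A e) + ennreal e \<and>
        emeasure N A \<le> emeasure M (thick A e) + ennreal e"
  shows "0 \<le> prokhorov_dist M N \<and> prokhorov_dist M N \<le> e"
proof -
  let ?S = "{e. e > 0 \<and> (\<forall>A. closed A \<longrightarrow>
        emeasure M A \<le> emeasure N (thick A e) + ennreal e \<and>
        emeasure N A \<le> emeasure M (thick A e) + ennreal e)}"
  have "e \<in> ?S" using assms by auto
  moreover have "bdd_below ?S" by (rule bdd_belowI[of _ 0]) auto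
  ultimately show ?thesis unfolding prokhorov_dist_def
    by (metis (no_types, lifting) cInf_greatest cInf_lower empty_iff less_imp_le mem_Collect_eq)
qed

lemma subset_thick: "0 \<le> e \<Longrightarrow> A \<subseteq> thick A e"
  unfolding thick_def by (metis (mono_tags, lifting) dist_self mem_Collect_eq subsetI)

lemma decseq_small:
  assumes "\<And>n. B n \<in> sets M" "\<And>n. B (Suc n) \<subseteq> B n" "emeasure M (B 0) < \<infinity>"
    "(\<Inter>n. B n) = {}" "e > 0"
  shows "\<exists>n. emeasure M (B n) < ennreal e"
proof -
  have dec: "antimono_on UNIV B"
    using assms(2) by (simp add: antimono_iff_le_Suc)
  have fin: "emeasure M (B n) \<noteq> \<infinity>" for n
  proof -
    have "B n \<subseteq> B 0" using dec by (auto simp: monotone_on_def)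
    then have "emeasure M (B n) \<le> emeasure M (B 0)" by (rule emeasure_mono) (rule assms(1))
    then show ?thesis using assms(3) by auto
  qed
  have "(\<lambda>i. emeasure M (B i)) \<longlonglongrightarrow> emeasure M (\<Inter> (range B))"
    by (rule Lim_emeasure_decseq) (use assms(1) dec fin in auto)
  then have "(\<lambda>i. emeasure M (B i)) \<longlonglongrightarrow> 0" using assms(4) by simp
  moreover have "(0::ennreal) < ennreal e" using assms(5) by simp
  ultimately have "eventually (\<lambda>i. emeasure M (B i) < ennreal e) sequentially"
    by (rule order_tendstoD(2))
  then show ?thesis by (meson eventually_sequentially order_refl)
qed

theorem lemma3p2:
  fixes x0 :: "'a::metric_space" and M :: "'a measure"
  assumes "boundedly_compact_pmm x0 M"
  shows "(\<forall>t\<ge>0. ((\<lambda>s. hausdorff_dist (cball x0 s) (cball x0 t)) \<longlongrightarrow> 0) (at_right t))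
       \<and> (\<forall>r>0. ((\<lambda>s. hausdorff_dist (cball x0 s) (closure (ball x0 r))) \<longlongrightarrow> 0) (at_left r))
       \<and> (\<forall>t\<ge>0. ((\<lambda>s. prokhorov_dist (restrict_meas M (cball x0 s)) (restrict_meas M (cball x0 t)))
              \<longlongrightarrow> 0) (at_right t))
       \<and> (\<forall>r>0. ((\<lambda>s. prokhorov_dist (restrict_meas M (cball x0 s)) (restrict_meas M (ball x0 r)))
              \<longlongrightarrow> 0) (at_left r))"
proof -
  have sM: "sets M = sets borel" using assms by (simp add: boundedly_compact_pmm_def)
  have cb: "\<forall>(x::'a) (r::real). compact (cball x r)" using assms by (simp add: boundedly_compact_pmm_def)
  have fin: "\<And>(x::'a) (r::real). emeasure M (cball x r) < \<infinity>" using assms by (simp add: boundedly_compact_pmm_def)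
  have closedM: "A \<in> sets M" if "closed A" for A using that sM by simp
  have openM: "A \<in> sets M" if "open A" for A using that sM by simp
  have P1: "((\<lambda>s. hausdorff_dist (cball x0 s) (cball x0 t)) \<longlongrightarrow> 0) (at_right t)"
    if "t \<ge> 0" for t
  proof (rule tendsto0I)
    fix \<epsilon> :: real assume "\<epsilon> > 0"
    define e where "e = \<epsilon>/2"
    have e: "e > 0" "e < \<epsilon>" using \<open>\<epsilon>>0\<close> by (auto simp: e_def)
    define U where "U = (\<Union>a\<in>cball x0 t. ball a e)"
    define K where "K = cball x0 (t+1) \<inter> - U"
    have "open U" unfolding U_def by auto
    then have "compact K" unfolding K_def using cb
      by (metis compact_Int_closed open_closed)
    moreover have "continuous_on K (dist x0)" by (intro continuous_intros)
    moreover have "\<forall>y\<in>K. t < dist x0 y"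
    proof
      fix y assume "y \<in> K"
      then have "y \<notin> ball y e \<or> y \<notin> cball x0 t" unfolding K_def U_def by blast
      then show "t < dist x0 y" using e by auto
    qed
    ultimately obtain m where m: "m > t" "\<forall>y\<in>K. m \<le> dist x0 y"
      using compact_min_gt by blast
    show "eventually (\<lambda>s. 0 \<le> hausdorff_dist (cball x0 s) (cball x0 t)
               \<and> hausdorff_dist (cball x0 s) (cball x0 t) < \<epsilon>) (at_right t)"
      unfolding eventually_at_right_field
    proof (intro exI[of _ "min m (t+1)"] conjI allI impI)
      show "t < min m (t+1)" using m by simp
      fix s assume s: "t < s" "s < min m (t+1)"
      have "cball x0 s \<subseteq> thick (cball x0 t) e"
      proof
        fix y assume y: "y \<in> cball x0 s"
        then have "dist x0 y < m" using s by simp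
        then have "y \<notin> K" using m(2) by force
        moreover have "y \<in> cball x0 (t+1)" using y s by auto
        ultimately have "y \<in> U" unfolding K_def by auto
        then obtain a where "a \<in> cball x0 t" "dist a y < e" unfolding U_def by auto
        then show "y \<in> thick (cball x0 t) e" unfolding thick_def
          by (auto simp: dist_commute intro!: bexI[of _ a])
      qed
      moreover have "cball x0 t \<subseteq> thick (cball x0 s) e"
      proof -
        have "cball x0 t \<subseteq> cball x0 s" using s by (intro subset_cball) simp
        then show ?thesis by (rule order_trans[OF _ subset_thick]) (use e in simp)
      qed
      ultimately have "0 \<le> hausdorff_dist (cball x0 s) (cball x0 t)
               \<and> hausdorff_dist (cball x0 s) (cball x0 t) \<le> e"
        using e by (intro hd_bound) auto
      then show "0 \<le> hausdorff_dist (cball x0 s) (cball x0 t)" "hausdorff_dist (cball x0 s) (cball x0 t) < \<epsilon>"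
        using e by linarith+
    qed
  qed
  have P2: "((\<lambda>s. hausdorff_dist (cball x0 s) (closure (ball x0 r))) \<longlongrightarrow> 0) (at_left r)"
    if "r > 0" for r
  proof (rule tendsto0I)
    fix \<epsilon> :: real assume "\<epsilon> > 0"
    define e where "e = \<epsilon>/2"
    have e: "e > 0" "e < \<epsilon>" using \<open>\<epsilon>>0\<close> by (auto simp: e_def)
    have "closure (ball x0 r) \<subseteq> cball x0 r" by (intro closure_minimal ball_subset_cball closed_cball)
    then have "compact (closure (ball x0 r))" using cb
      by (metis closed_closure compact_Int_closed inf.absorb_iff2)
    moreover have "closure (ball x0 r) \<subseteq> \<Union> ((\<lambda>z. ball z e) ` ball x0 r)"
    proof
      fix y assume "y \<in> closure (ball x0 r)"
      then obtain z where "z \<in> ball x0 r" "dist z y < e"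
        using closure_approachable e by blast
      then show "y \<in> \<Union> ((\<lambda>z. ball z e) ` ball x0 r)" by auto
    qed
    moreover have "\<And>T. T \<in> ball x0 r \<Longrightarrow> open (ball T e)" by simp
    ultimately obtain D where D: "D \<subseteq> ball x0 r" "finite D"
      "closure (ball x0 r) \<subseteq> \<Union> ((\<lambda>z. ball z e) ` D)"
      using compactE_image[of "closure (ball x0 r)" "ball x0 r" "\<lambda>z. ball z e"] by blast
    define s0 where "s0 = Max (insert 0 (dist x0 ` D))"
    have "s0 < r" unfolding s0_def using D \<open>r>0\<close> by (subst Max_less_iff) auto
    have Ds0: "\<forall>z\<in>D. dist x0 z \<le> s0" unfolding s0_def using D by auto
    show "eventually (\<lambda>s. 0 \<le> hausdorff_dist (cball x0 s) (closure (ball x0 r))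
               \<and> hausdorff_dist (cball x0 s) (closure (ball x0 r)) < \<epsilon>) (at_left r)"
      unfolding eventually_at_left_field
    proof (intro exI[of _ s0] conjI allI impI)
      show "s0 < r" by fact
      fix s assume s: "s0 < s" "s < r"
      have "cball x0 s \<subseteq> ball x0 r" using s by (auto simp: subset_eq)
      then have "cball x0 s \<subseteq> closure (ball x0 r)"
        using closure_subset by blast
      then have "cball x0 s \<subseteq> thick (closure (ball x0 r)) e"
        by (rule order_trans[OF _ subset_thick]) (use e in simp)
      moreover have "closure (ball x0 r) \<subseteq> thick (cball x0 s) e"
      proof
        fix y assume "y \<in> closure (ball x0 r)"
        then obtain z where z: "z \<in> D" "y \<in> ball z e" using D by auto
        then have "z \<in> cball x0 s" using Ds0 s by fastforce
        then show "y \<in> thick (cball x0 s) e" unfolding thick_def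
          using z by (auto simp: dist_commute intro!: bexI[of _ z])
      qed
      ultimately have "0 \<le> hausdorff_dist (cball x0 s) (closure (ball x0 r))
               \<and> hausdorff_dist (cball x0 s) (closure (ball x0 r)) \<le> e"
        using e by (intro hd_bound) auto
      then show "0 \<le> hausdorff_dist (cball x0 s) (closure (ball x0 r))" "hausdorff_dist (cball x0 s) (closure (ball x0 r)) < \<epsilon>"
        using e by linarith+
    qed
  qed

  have RM: "emeasure (restrict_meas M S) X = emeasure M (S \<inter> X)"
    if "S \<in> sets M" "X \<in> sets M" for S X
    unfolding restrict_meas_def using emeasure_restricted that by blast
  have cM: "cball x0 u \<in> sets M" for u by (intro closedM closed_cball)
  have bM: "ball x0 u \<in> sets M" for u by (intro openM open_ball)
  have TM: "thick A e \<in> sets M" if "closed A" for A e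
    by (intro closedM thick_closed[OF cb that])
  have P3: "((\<lambda>s. prokhorov_dist (restrict_meas M (cball x0 s)) (restrict_meas M (cball x0 t)))
              \<longlongrightarrow> 0) (at_right t)" if "t \<ge> 0" for t
  proof (rule tendsto0I)
    fix \<epsilon> :: real assume "\<epsilon> > 0"
    define e where "e = \<epsilon>/2"
    have e: "e > 0" "e < \<epsilon>" using \<open>\<epsilon>>0\<close> by (auto simp: e_def)
    define B where "B n = cball x0 (t + inverse (real (Suc n))) - cball x0 t" for n
    have "\<exists>n. emeasure M (B n) < ennreal e"
    proof (rule decseq_small)
      show "B n \<in> sets M" for n unfolding B_def using cM by (intro sets.Diff)
      show "B (Suc n) \<subseteq> B n" for n
      proof -
        have "inverse (real (Suc (Suc n))) \<le> inverse (real (Suc n))"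
          by (intro le_imp_inverse_le) auto
        then show ?thesis unfolding B_def by (intro Diff_mono subset_cball) auto
      qed
      have "B 0 \<subseteq> cball x0 (t+1)" unfolding B_def by auto
      then have "emeasure M (B 0) \<le> emeasure M (cball x0 (t+1))" by (rule emeasure_mono) (rule cM)
      then show "emeasure M (B 0) < \<infinity>" using fin[of x0 "t+1"] by order
      show "(\<Inter>n. B n) = {}"
      proof (rule ccontr)
        assume "(\<Inter>n. B n) \<noteq> {}"
        then obtain y where y: "\<And>n. y \<in> B n" by blast
        have "dist x0 y > t" using y[of 0] unfolding B_def by auto
        then obtain n where n: "inverse (real (Suc n)) < dist x0 y - t"
          using reals_Archimedean[of "dist x0 y - t"] by auto
        from y[of n] n show False unfolding B_def by auto
      qed
      show "e > 0" by fact
    qed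
    then obtain n where n: "emeasure M (B n) < ennreal e" by blast
    define d where "d = inverse (real (Suc n))"
    have "d > 0" unfolding d_def by simp
    show "eventually (\<lambda>s. 0 \<le> prokhorov_dist (restrict_meas M (cball x0 s)) (restrict_meas M (cball x0 t))
       \<and> prokhorov_dist (restrict_meas M (cball x0 s)) (restrict_meas M (cball x0 t)) < \<epsilon>) (at_right t)"
      unfolding eventually_at_right_field
    proof (intro exI[of _ "t+d"] conjI allI impI)
      show "t < t + d" using \<open>d>0\<close> by simp
      fix s assume s: "t < s" "s < t + d"
      have "cball x0 s - cball x0 t \<subseteq> B n" unfolding B_def d_def[symmetric]
        using s by (intro Diff_mono subset_cball) auto
      then have "emeasure M (cball x0 s - cball x0 t) \<le> emeasure M (B n)"
        by (rule emeasure_mono) (simp add: B_def cM sets.Diff)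
      then have Bs: "emeasure M (cball x0 s - cball x0 t) \<le> ennreal e" using n by order
      have "\<forall>A. closed A \<longrightarrow>
        emeasure (restrict_meas M (cball x0 s)) A \<le> emeasure (restrict_meas M (cball x0 t)) (thick A e) + ennreal e \<and>
        emeasure (restrict_meas M (cball x0 t)) A \<le> emeasure (restrict_meas M (cball x0 s)) (thick A e) + ennreal e"
      proof (intro allI impI conjI)
        fix A :: "'a set" assume A: "closed A"
        have AM: "A \<in> sets M" using A by (rule closedM)
        have TAM: "thick A e \<in> sets M" using A by (rule TM)
        have sub: "A \<subseteq> thick A e" using e by (intro subset_thick) simp
        have "emeasure M (cball x0 s \<inter> A) \<le> emeasure M ((cball x0 t \<inter> thick A e) \<union> (cball x0 s - cball x0 t))"
          by (rule emeasure_mono) (use sub in \<open>auto intro!: sets.Un sets.Diff sets.Int cM TAM\<close>)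
        also have "\<dots> \<le> emeasure M (cball x0 t \<inter> thick A e) + emeasure M (cball x0 s - cball x0 t)"
          by (rule emeasure_subadditive) (auto intro!: sets.Diff sets.Int cM TAM)
        also have "\<dots> \<le> emeasure M (cball x0 t \<inter> thick A e) + ennreal e" using Bs by (rule add_left_mono)
        finally show "emeasure (restrict_meas M (cball x0 s)) A \<le> emeasure (restrict_meas M (cball x0 t)) (thick A e) + ennreal e"
          by (simp add: RM cM AM TAM)
        have "emeasure M (cball x0 t \<inter> A) \<le> emeasure M (cball x0 s \<inter> thick A e)"
          by (rule emeasure_mono) (use sub s in \<open>auto intro!: sets.Int cM TAM\<close>)
        then have "emeasure M (cball x0 t \<inter> A) \<le> emeasure M (cball x0 s \<inter> thick A e) + ennreal e"
          by (rule add_increasing2[rotated]) simp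
        then show "emeasure (restrict_meas M (cball x0 t)) A \<le> emeasure (restrict_meas M (cball x0 s)) (thick A e) + ennreal e"
          by (simp add: RM cM AM TAM)
      qed
      then have "0 \<le> prokhorov_dist (restrict_meas M (cball x0 s)) (restrict_meas M (cball x0 t))
       \<and> prokhorov_dist (restrict_meas M (cball x0 s)) (restrict_meas M (cball x0 t)) \<le> e"
        using e by (intro pd_bound) auto
      then show "0 \<le> prokhorov_dist (restrict_meas M (cball x0 s)) (restrict_meas M (cball x0 t))"
        "prokhorov_dist (restrict_meas M (cball x0 s)) (restrict_meas M (cball x0 t)) < \<epsilon>"
        using e by linarith+
    qed
  qed
  have P4: "((\<lambda>s. prokhorov_dist (restrict_meas M (cball x0 s)) (restrict_meas M (ball x0 r)))
              \<longlongrightarrow> 0) (at_left r)" if "r > 0" for r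
  proof (rule tendsto0I)
    fix \<epsilon> :: real assume "\<epsilon> > 0"
    define e where "e = \<epsilon>/2"
    have e: "e > 0" "e < \<epsilon>" using \<open>\<epsilon>>0\<close> by (auto simp: e_def)
    define B where "B n = ball x0 r - cball x0 (r - inverse (real (Suc n)))" for n
    have "\<exists>n. emeasure M (B n) < ennreal e"
    proof (rule decseq_small)
      show "B n \<in> sets M" for n unfolding B_def using cM bM by (intro sets.Diff)
      show "B (Suc n) \<subseteq> B n" for n
      proof -
        have "inverse (real (Suc (Suc n))) \<le> inverse (real (Suc n))"
          by (intro le_imp_inverse_le) auto
        then show ?thesis unfolding B_def by (intro Diff_mono subset_cball) auto
      qed
      have "B 0 \<subseteq> cball x0 r" unfolding B_def by auto
      then have "emeasure M (B 0) \<le> emeasure M (cball x0 r)" by (rule emeasure_mono) (rule cM)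
      then show "emeasure M (B 0) < \<infinity>" using fin[of x0 r] by order
      show "(\<Inter>n. B n) = {}"
      proof (rule ccontr)
        assume "(\<Inter>n. B n) \<noteq> {}"
        then obtain y where y: "\<And>n. y \<in> B n" by blast
        have "dist x0 y < r" using y[of 0] unfolding B_def by auto
        then obtain n where n: "inverse (real (Suc n)) < r - dist x0 y"
          using reals_Archimedean[of "r - dist x0 y"] by auto
        from y[of n] n show False unfolding B_def by auto
      qed
      show "e > 0" by fact
    qed
    then obtain n where n: "emeasure M (B n) < ennreal e" by blast
    define d where "d = inverse (real (Suc n))"
    have "d > 0" unfolding d_def by simp
    show "eventually (\<lambda>s. 0 \<le> prokhorov_dist (restrict_meas M (cball x0 s)) (restrict_meas M (ball x0 r))
       \<and> prokhorov_dist (restrict_meas M (cball x0 s)) (restrict_meas M (ball x0 r)) < \<epsilon>) (at_left r)"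
      unfolding eventually_at_left_field
    proof (intro exI[of _ "r-d"] conjI allI impI)
      show "r - d < r" using \<open>d>0\<close> by simp
      fix s assume s: "r - d < s" "s < r"
      have "ball x0 r - cball x0 s \<subseteq> B n" unfolding B_def d_def[symmetric]
        using s by (intro Diff_mono subset_cball) auto
      then have "emeasure M (ball x0 r - cball x0 s) \<le> emeasure M (B n)"
        by (rule emeasure_mono) (simp add: B_def cM bM sets.Diff)
      then have Bs: "emeasure M (ball x0 r - cball x0 s) \<le> ennreal e" using n by order
      have cs: "cball x0 s \<subseteq> ball x0 r" using s by (auto simp: subset_eq)
      have "\<forall>A. closed A \<longrightarrow>
        emeasure (restrict_meas M (cball x0 s)) A \<le> emeasure (restrict_meas M (ball x0 r)) (thick A e) + ennreal e \<and>
        emeasure (restrict_meas M (ball x0 r)) A \<le> emeasure (restrict_meas M (cball x0 s)) (thick A e) + ennreal e"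
      proof (intro allI impI conjI)
        fix A :: "'a set" assume A: "closed A"
        have AM: "A \<in> sets M" using A by (rule closedM)
        have TAM: "thick A e \<in> sets M" using A by (rule TM)
        have sub: "A \<subseteq> thick A e" using e by (intro subset_thick) simp
        have "emeasure M (ball x0 r \<inter> A) \<le> emeasure M ((cball x0 s \<inter> thick A e) \<union> (ball x0 r - cball x0 s))"
          by (rule emeasure_mono) (use sub in \<open>auto intro!: sets.Un sets.Diff sets.Int cM bM TAM\<close>)
        also have "\<dots> \<le> emeasure M (cball x0 s \<inter> thick A e) + emeasure M (ball x0 r - cball x0 s)"
          by (rule emeasure_subadditive) (auto intro!: sets.Diff sets.Int cM bM TAM)
        also have "\<dots> \<le> emeasure M (cball x0 s \<inter> thick A e) + ennreal e" using Bs by (rule add_left_mono)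
        finally show "emeasure (restrict_meas M (ball x0 r)) A \<le> emeasure (restrict_meas M (cball x0 s)) (thick A e) + ennreal e"
          by (simp add: RM cM bM AM TAM)
        have "emeasure M (cball x0 s \<inter> A) \<le> emeasure M (ball x0 r \<inter> thick A e)"
          by (rule emeasure_mono) (use sub cs in \<open>auto intro!: sets.Int bM TAM\<close>)
        then have "emeasure M (cball x0 s \<inter> A) \<le> emeasure M (ball x0 r \<inter> thick A e) + ennreal e"
          by (rule add_increasing2[rotated]) simp
        then show "emeasure (restrict_meas M (cball x0 s)) A \<le> emeasure (restrict_meas M (ball x0 r)) (thick A e) + ennreal e"
          by (simp add: RM cM bM AM TAM)
      qed
      then have "0 \<le> prokhorov_dist (restrict_meas M (cball x0 s)) (restrict_meas M (ball x0 r))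
       \<and> prokhorov_dist (restrict_meas M (cball x0 s)) (restrict_meas M (ball x0 r)) \<le> e"
        using e by (intro pd_bound) auto
      then show "0 \<le> prokhorov_dist (restrict_meas M (cball x0 s)) (restrict_meas M (ball x0 r))"
        "prokhorov_dist (restrict_meas M (cball x0 s)) (restrict_meas M (ball x0 r)) < \<epsilon>"
        using e by linarith+
    qed
  qed
  show ?thesis using P1 P2 P3 P4 by blast
qed

end
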